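(* Let $\mathbb{H}$ be a real Hilbert space, let $\mathbf{x}$ be a random vector in $\mathbb{H}$ with $\mathbb{E}[\|\mathbf{x}\|^2]<\infty$, and let $\mathcal{S}$ be the operator $\mathcal{S}\boldsymbol{\theta}=\mathbb{E}[\langle\boldsymbol{\theta},\mathbf{x}\rangle\mathbf{x}]$. Assume $\mathcal{S}$ has an orthonormal basis $(\mathbf{e}_i)$ of eigenvectors with eigenvalues $\lambda_i$ satisfying $0<\lambda_i<\tfrac12$ for all $i$. Let $\gamma\in(0,1)$ and $\mathcal{T}=\mathrm{Id}-\gamma\mathcal{S}$. Let $\boldsymbol{\theta}\in\mathbb{H}$, $\beta\in\mathbb{R}$, and let $(t_n)_{n\ge1}$ be a sequence of positive numbers with $\sum_{n\ge1}\frac{1}{n t_n}<\infty$. If $\|\mathcal{T}^n\boldsymbol{\theta}\|^2\le \frac{1}{n^\beta t_n}$ for every $n\ge1$, then $\|\boldsymbol{\theta}\|_\beta^2<\infty$.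
   Context: For $\boldsymbol{\theta}=\sum_i\theta_i\mathbf{e}_i$ and $\beta\in\mathbb{R}$, $\|\boldsymbol{\theta}\|_\beta^2:=\langle\boldsymbol{\theta},\mathcal{S}^{-\beta}\boldsymbol{\theta}\rangle=\sum_i\lambda_i^{-\beta}\theta_i^2\in[0,\infty]$, where $\mathcal{S}^{\kappa}\boldsymbol{\theta}=\sum_i\lambda_i^{\kappa}\theta_i\mathbf{e}_i$. Note $\mathcal{T}^n\boldsymbol{\theta}$ equals the expectation $\mathbb{E}[\boldsymbol{\theta}(n)]$ of the random iteration $\boldsymbol{\theta}(0)=\boldsymbol{\theta}$, $\boldsymbol{\theta}(k+1)=\boldsymbol{\theta}(k)-\gamma\langle\boldsymbol{\theta}(k),\mathbf{x}(k)\rangle\mathbf{x}(k)$ with $\mathbf{x}(k)$ i.i.d. copies of $\mathbf{x}$. *)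

theory Defs
  imports "HOL-Probability.Probability"
begin

definition second_moment_op ::
  "'s measure \<Rightarrow> ('s \<Rightarrow> 'a::{real_inner, banach, second_countable_topology}) \<Rightarrow> 'a \<Rightarrow> 'a" where
  "second_moment_op M X v = (\<integral>\<omega>. inner v (X \<omega>) *\<^sub>R X \<omega> \<partial>M)"

definition orthonormal_basis :: "'a::real_inner set \<Rightarrow> bool" where
  "orthonormal_basis E \<longleftrightarrow> pairwise orthogonal E \<and> (\<forall>e\<in>E. norm e = 1) \<and> closure (span E) = UNIV"

definition beta_norm_sq :: "'a::real_inner set \<Rightarrow> ('a \<Rightarrow> real) \<Rightarrow> real \<Rightarrow> 'a \<Rightarrow> ennreal" where
  "beta_norm_sq E lam \<beta> \<theta> = (\<Sum>\<^sub>\<infinity>e\<in>E. ennreal (lam e powr (-\<beta>) * (inner \<theta> e)\<^sup>2))"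

end

theory Submission imports Defs begin

lemma bessel_fin:
  fixes v :: "'a::real_inner"
  assumes "pairwise orthogonal E" "\<forall>e\<in>E. norm e = 1" "finite F" "F \<subseteq> E"
  shows "(\<Sum>e\<in>F. (inner v e)\<^sup>2) \<le> (norm v)\<^sup>2"
proof -
  define w where "w = (\<Sum>e\<in>F. inner v e *\<^sub>R e)"
  have ee: "inner e e' = (if e = e' then 1 else 0)" if "e \<in> F" "e' \<in> F" for e e'
  proof (cases "e = e'")
    case True then show ?thesis using assms that by (simp add: dot_square_norm subsetD)
  next
    case False then show ?thesis using assms that unfolding pairwise_def orthogonal_def by auto
  qed
  have vw: "inner v w = (\<Sum>e\<in>F. (inner v e)\<^sup>2)"
    unfolding w_def by (simp add: inner_sum_right power2_eq_square)
  have ww: "inner w w = (\<Sum>e\<in>F. (inner v e)\<^sup>2)"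
  proof -
    have "inner w w = (\<Sum>e\<in>F. \<Sum>e'\<in>F. inner v e * inner v e' * inner e' e)"
      unfolding w_def by (simp add: inner_sum_left inner_sum_right sum_distrib_left mult.assoc)
    also have "\<dots> = (\<Sum>e\<in>F. \<Sum>e'\<in>F. if e = e' then inner v e * inner v e' else 0)"
      by (intro sum.cong refl) (auto simp: ee)
    also have "\<dots> = (\<Sum>e\<in>F. (inner v e)\<^sup>2)"
      using assms(3) by (simp add: power2_eq_square)
    finally show ?thesis .
  qed
  have "0 \<le> inner (v - w) (v - w)" by simp
  also have "\<dots> = inner v v - 2 * inner v w + inner w w"
    by (simp add: inner_diff_left inner_diff_right inner_commute)
  finally show ?thesis using vw ww by (simp add: dot_square_norm[symmetric])
qed

lemma smo_integrable:
  assumes "X \<in> borel_measurable M" "integrable M (\<lambda>\<omega>. (norm (X \<omega>))\<^sup>2)"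
  shows "integrable M (\<lambda>\<omega>. inner v (X \<omega>) *\<^sub>R (X \<omega> :: 'a::{real_inner, banach, second_countable_topology}))"
proof (rule Bochner_Integration.integrable_bound)
  show "integrable M (\<lambda>\<omega>. norm v * (norm (X \<omega>))\<^sup>2)" using assms(2) by simp
  show "(\<lambda>\<omega>. inner v (X \<omega>) *\<^sub>R X \<omega>) \<in> borel_measurable M" using assms(1) by measurable
  show "AE \<omega> in M. norm (inner v (X \<omega>) *\<^sub>R X \<omega>) \<le> norm (norm v * (norm (X \<omega>))\<^sup>2)"
  proof (rule AE_I2)
    fix \<omega>
    have "norm (inner v (X \<omega>) *\<^sub>R X \<omega>) = \<bar>inner v (X \<omega>)\<bar> * norm (X \<omega>)" by simp
    also have "\<dots> \<le> (norm v * norm (X \<omega>)) * norm (X \<omega>)"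
      by (intro mult_right_mono Cauchy_Schwarz_ineq2) auto
    finally show "norm (inner v (X \<omega>) *\<^sub>R X \<omega>) \<le> norm (norm v * (norm (X \<omega>))\<^sup>2)"
      by (simp add: power2_eq_square mult.assoc)
  qed
qed

lemma smo_inner:
  assumes "X \<in> borel_measurable M" "integrable M (\<lambda>\<omega>. (norm (X \<omega>))\<^sup>2)"
    and "second_moment_op M X e = l *\<^sub>R e"
  shows "inner (second_moment_op M X v) e = l * inner v (e :: 'a::{real_inner, banach, second_countable_topology})"
proof -
  have "inner (second_moment_op M X v) e = (\<integral>\<omega>. inner (inner v (X \<omega>) *\<^sub>R X \<omega>) e \<partial>M)"
    unfolding second_moment_op_def using smo_integrable[OF assms(1,2)]
    by (subst integral_inner_left[symmetric]) auto
  also have "\<dots> = (\<integral>\<omega>. inner v (inner e (X \<omega>) *\<^sub>R X \<omega>) \<partial>M)"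
    by (simp add: inner_commute mult.commute)
  also have "\<dots> = inner v (second_moment_op M X e)"
    unfolding second_moment_op_def using smo_integrable[OF assms(1,2)]
    by (subst integral_inner_right[symmetric]) auto
  finally show ?thesis using assms(3) by simp
qed

lemma T_pow_inner:
  assumes "X \<in> borel_measurable M" "integrable M (\<lambda>\<omega>. (norm (X \<omega>))\<^sup>2)"
    and "second_moment_op M X e = l *\<^sub>R e"
  shows "inner (((\<lambda>v. v - g *\<^sub>R second_moment_op M X v) ^^ n) \<theta>) e = (1 - g * l) ^ n * inner \<theta> (e :: 'a::{real_inner, banach, second_countable_topology})"
proof (induction n)
  case 0 then show ?case by simp
next
  case (Suc n)
  then show ?case using smo_inner[OF assms]
    by (simp add: inner_diff_left algebra_simps)
qed

lemma lam_bound: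
  fixes x \<beta> :: real
  assumes x: "0 < x" "x < 1/2" and b: "0 < \<beta>"
  shows "\<exists>K::nat. K \<ge> 1 \<and> x powr (-\<beta>) \<le>
     (8 powr \<beta> * 8 / min 1 (2 powr (\<beta>-1))) * (\<Sum>n\<in>{K..<2*K}. real n powr (\<beta>-1) * (1-x)^(2*n))"
proof -
  define c1 where "c1 = min 1 (2 powr (\<beta>-1))"
  have c1: "0 < c1" "c1 \<le> 1" "c1 \<le> 2 powr (\<beta>-1)" unfolding c1_def by auto
  define M where "M = nat \<lfloor>1/(8*x)\<rfloor>"
  define K where "K = Suc M"
  have M1: "real M \<le> 1/(8*x)" unfolding M_def using x by (simp add: of_nat_nat)
  have fl: "0 \<le> \<lfloor>1/(8*x)\<rfloor>" using x by simp
  have "1/(8*x) < real_of_int \<lfloor>1/(8*x)\<rfloor> + 1" by (rule real_of_int_floor_add_one_gt)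
  moreover have "real K = real_of_int \<lfloor>1/(8*x)\<rfloor> + 1" unfolding K_def M_def using fl
    by (simp only: of_nat_Suc of_nat_nat)
  ultimately have K1: "1/(8*x) < real K" by linarith
  have Kpos: "K \<ge> 1" unfolding K_def by simp
  have tm: "c1 * real K powr (\<beta>-1) / 8 \<le> real n powr (\<beta>-1) * (1-x)^(2*n)" if n: "n \<in> {K..<2*K}" for n
  proof -
    have n1: "n \<ge> 1" "K \<le> n" "n < 2*K" using n Kpos by auto
    have "real (n-1) * x \<le> 2 * real M * x" using n1 unfolding K_def
      by (intro mult_right_mono) (use x in auto)
    also have "\<dots> \<le> 1/4" using M1 x by (simp add: field_simps)
    finally have nx: "real (n-1) * x \<le> 1/4" .
    have "1 + real (2*(n-1)) * (-x) \<le> (1 + (-x))^(2*(n-1))"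
      by (rule Bernoulli_inequality) (use x in auto)
    hence B: "1/2 \<le> (1-x)^(2*(n-1))" using nx by simp
    have "(1/2::real)^2 \<le> (1-x)^2" by (rule power_mono) (use x in auto)
    hence A: "1/4 \<le> (1-x)^2" by (simp add: power2_eq_square)
    have e2: "2*n = 2 + 2*(n-1)" using n1 by simp
    have "(1-x)^(2*n) = (1-x)^2 * (1-x)^(2*(n-1))" unfolding e2 power_add by simp
    moreover have "1/4 * (1/2) \<le> (1-x)^2 * (1-x)^(2*(n-1))"
      by (rule mult_mono) (use A B in auto)
    ultimately have P: "1/8 \<le> (1-x)^(2*n)" by simp
    have W: "c1 * real K powr (\<beta>-1) \<le> real n powr (\<beta>-1)"
    proof (cases "\<beta> \<ge> 1")
      case True
      have "real K powr (\<beta>-1) \<le> real n powr (\<beta>-1)"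
        by (rule powr_mono2) (use True n1 in auto)
      moreover have "c1 * real K powr (\<beta>-1) \<le> real K powr (\<beta>-1)"
        using c1 by (simp add: mult_left_le_one_le)
      ultimately show ?thesis by linarith
    next
      case False
      have "real (2*K) powr (\<beta>-1) \<le> real n powr (\<beta>-1)"
        by (rule powr_mono2') (use False n1 in auto)
      moreover have "real (2*K) powr (\<beta>-1) = 2 powr (\<beta>-1) * real K powr (\<beta>-1)"
        by (simp add: powr_mult)
      moreover have "c1 * real K powr (\<beta>-1) \<le> 2 powr (\<beta>-1) * real K powr (\<beta>-1)"
        using c1 by (intro mult_right_mono) auto
      ultimately show ?thesis by linarith
    qed
    have "c1 * real K powr (\<beta>-1) * (1/8) \<le> real n powr (\<beta>-1) * (1-x)^(2*n)"
      by (rule mult_mono) (use W P c1 in auto)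
    thus ?thesis by simp
  qed
  have s1: "(\<Sum>n\<in>{K..<2*K}. c1 * real K powr (\<beta>-1) / 8) \<le> (\<Sum>n\<in>{K..<2*K}. real n powr (\<beta>-1) * (1-x)^(2*n))"
    by (rule sum_mono) (rule tm)
  have s2: "(\<Sum>n\<in>{K..<2*K}. c1 * real K powr (\<beta>-1) / 8) = c1 * real K powr \<beta> / 8"
  proof -
    have "(\<Sum>n\<in>{K..<2*K}. c1 * real K powr (\<beta>-1) / 8) = real K * (c1 * real K powr (\<beta>-1) / 8)"
      by simp
    also have "\<dots> = c1 * (real K * real K powr (\<beta>-1)) / 8" by simp
    also have "real K * real K powr (\<beta>-1) = real K powr \<beta>"
      using Kpos by (simp add: powr_diff)
    finally show ?thesis .
  qed
  have S: "c1 * real K powr \<beta> / 8 \<le> (\<Sum>n\<in>{K..<2*K}. real n powr (\<beta>-1) * (1-x)^(2*n))"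
    using s1 unfolding s2 .
  have "(1/(8*x)) powr \<beta> \<le> real K powr \<beta>"
    by (rule powr_mono2) (use b K1 x in auto)
  moreover have "(1/(8*x)) powr \<beta> = 1 / (8 powr \<beta> * x powr \<beta>)"
    using x by (subst powr_divide) (auto simp: powr_mult)
  ultimately have L: "1 / (8 powr \<beta> * x powr \<beta>) \<le> real K powr \<beta>" by simp
  have ap: "0 < 8 powr \<beta>" "0 < x powr \<beta>" using x by auto
  have "x powr (-\<beta>) = 8 powr \<beta> * (1 / (8 powr \<beta> * x powr \<beta>))"
    using ap by (simp add: powr_minus_divide)
  also have "\<dots> \<le> 8 powr \<beta> * real K powr \<beta>"
    using L ap by (intro mult_left_mono) auto
  finally have H1: "x powr (-\<beta>) \<le> 8 powr \<beta> * real K powr \<beta>" .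
  define Sm where "Sm = (\<Sum>n\<in>{K..<2*K}. real n powr (\<beta>-1) * (1-x)^(2*n))"
  have "real K powr \<beta> = 8/c1 * (c1 * real K powr \<beta> / 8)" using c1 by simp
  also have "\<dots> \<le> 8/c1 * Sm" unfolding Sm_def using S c1 by (intro mult_left_mono) auto
  finally have "8 powr \<beta> * real K powr \<beta> \<le> 8 powr \<beta> * (8/c1 * Sm)"
    by (intro mult_left_mono) auto
  also have "\<dots> = (8 powr \<beta> * 8 / c1) * Sm" by simp
  finally have H2: "8 powr \<beta> * real K powr \<beta> \<le> (8 powr \<beta> * 8 / c1) * Sm" .
  show ?thesis
  proof (intro exI conjI)
    show "K \<ge> 1" by (rule Kpos)
    show "x powr (-\<beta>) \<le> (8 powr \<beta> * 8 / min 1 (2 powr (\<beta>-1))) * (\<Sum>n\<in>{K..<2*K}. real n powr (\<beta>-1) * (1-x)^(2*n))"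
      using order.trans[OF H1 H2] unfolding Sm_def c1_def .
  qed
qed

theorem theorem2:
  fixes M :: "'s measure"
    and X :: "'s \<Rightarrow> 'a::{real_inner, banach, second_countable_topology}"
    and E :: "'a set" and lam :: "'a \<Rightarrow> real"
    and \<gamma> \<beta> :: real and \<theta> :: 'a and t :: "nat \<Rightarrow> real"
  assumes "prob_space M"
    and "X \<in> borel_measurable M"
    and "integrable M (\<lambda>\<omega>. (norm (X \<omega>))\<^sup>2)"
    and "orthonormal_basis E"
    and "\<And>e. e \<in> E \<Longrightarrow> second_moment_op M X e = lam e *\<^sub>R e"
    and "\<And>e. e \<in> E \<Longrightarrow> 0 < lam e \<and> lam e < 1/2"
    and "0 < \<gamma>" and "\<gamma> < 1"
    and "\<And>n. n \<ge> 1 \<Longrightarrow> t n > 0"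
    and "summable (\<lambda>n. 1 / (real (Suc n) * t (Suc n)))"
    and "\<And>n. n \<ge> 1 \<Longrightarrow>
           (norm (((\<lambda>v. v - \<gamma> *\<^sub>R second_moment_op M X v) ^^ n) \<theta>))\<^sup>2
             \<le> 1 / (real n powr \<beta> * t n)"
  shows "beta_norm_sq E lam \<beta> \<theta> < \<infinity>"
proof -
  define T where "T = (\<lambda>v. v - \<gamma> *\<^sub>R second_moment_op M X v)"
  have po: "pairwise orthogonal E" and no: "\<forall>e\<in>E. norm e = 1"
    using assms(4) unfolding orthonormal_basis_def by auto
  have bes: "(\<Sum>e\<in>F. (inner v e)\<^sup>2) \<le> (norm v)\<^sup>2" if "finite F" "F \<subseteq> E" for F v
    using bessel_fin[OF po no that] .
  have coef: "inner ((T ^^ n) \<theta>) e = (1 - \<gamma> * lam e) ^ n * inner \<theta> e" if "e \<in> E" for e n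
    unfolding T_def using T_pow_inner[OF assms(2,3) assms(5)[OF that]] .
  have hyp: "(norm ((T ^^ n) \<theta>))\<^sup>2 \<le> 1 / (real n powr \<beta> * t n)" if "n \<ge> 1" for n
    unfolding T_def using assms(11)[OF that] .
  define g where "g = (\<lambda>n. 1 / (real (Suc n) * t (Suc n)))"
  have gs: "summable g" using assms(10) unfolding g_def .
  have gnn: "0 \<le> g n" for n unfolding g_def using assms(9)[of "Suc n"] by simp
  have bound: "\<exists>C. \<forall>F. finite F \<and> F \<subseteq> E \<longrightarrow> (\<Sum>e\<in>F. lam e powr (-\<beta>) * (inner \<theta> e)\<^sup>2) \<le> C"
  proof (cases "\<beta> \<le> 0")
    case True
    show ?thesis
    proof (intro exI allI impI)
      fix F assume F: "finite F \<and> F \<subseteq> E"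
      have "(\<Sum>e\<in>F. lam e powr (-\<beta>) * (inner \<theta> e)\<^sup>2) \<le> (\<Sum>e\<in>F. (inner \<theta> e)\<^sup>2)"
      proof (rule sum_mono)
        fix e assume "e \<in> F"
        hence l: "0 < lam e" "lam e < 1/2" using F assms(6) by auto
        have "lam e powr (-\<beta>) \<le> 1 powr (-\<beta>)"
          by (rule powr_mono2) (use l True in auto)
        hence "lam e powr (-\<beta>) \<le> 1" by simp
        thus "lam e powr (-\<beta>) * (inner \<theta> e)\<^sup>2 \<le> (inner \<theta> e)\<^sup>2"
          by (simp add: mult_left_le_one_le)
      qed
      also have "\<dots> \<le> (norm \<theta>)\<^sup>2" using bes F by auto
      finally show "(\<Sum>e\<in>F. lam e powr (-\<beta>) * (inner \<theta> e)\<^sup>2) \<le> (norm \<theta>)\<^sup>2" .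
    qed
  next
    case False
    hence b: "0 < \<beta>" by simp
    define C0 where "C0 = 8 powr \<beta> * 8 / min 1 (2 powr (\<beta>-1))"
    have C0: "0 \<le> C0" unfolding C0_def by auto
    define w where "w = (\<lambda>n::nat. real n powr (\<beta>-1))"
    have wnn: "0 \<le> w n" for n unfolding w_def by simp
    define xx where "xx = (\<lambda>e. \<gamma> * lam e)"
    have xx: "0 < xx e" "xx e < 1/2" if "e \<in> E" for e
    proof -
      have l: "0 < lam e" "lam e < 1/2" using assms(6) that by auto
      show "0 < xx e" unfolding xx_def using l assms(7) by simp
      have "\<gamma> * lam e < 1 * (1/2)" by (rule mult_strict_mono) (use l assms(7,8) in auto)
      thus "xx e < 1/2" unfolding xx_def by simp
    qed
    have lamx: "lam e powr (-\<beta>) = \<gamma> powr \<beta> * xx e powr (-\<beta>)" if "e \<in> E" for e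
    proof -
      have l: "0 < lam e" using assms(6) that by auto
      have "xx e powr (-\<beta>) = \<gamma> powr (-\<beta>) * lam e powr (-\<beta>)"
        unfolding xx_def using l assms(7) by (simp add: powr_mult)
      hence "\<gamma> powr \<beta> * xx e powr (-\<beta>) = (\<gamma> powr \<beta> * \<gamma> powr (-\<beta>)) * lam e powr (-\<beta>)" by simp
      also have "\<gamma> powr \<beta> * \<gamma> powr (-\<beta>) = 1" using assms(7) by (simp add: powr_minus)
      finally show ?thesis by simp
    qed
    define SS where "SS = suminf g"
    show ?thesis
    proof (intro exI allI impI)
      fix F assume F: "finite F \<and> F \<subseteq> E"
      have "\<forall>e\<in>F. \<exists>K::nat. K \<ge> 1 \<and> xx e powr (-\<beta>) \<le> C0 * (\<Sum>n\<in>{K..<2*K}. w n * (1 - xx e)^(2*n))"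
      proof
        fix e assume "e \<in> F"
        hence eE: "e \<in> E" using F by auto
        show "\<exists>K::nat. K \<ge> 1 \<and> xx e powr (-\<beta>) \<le> C0 * (\<Sum>n\<in>{K..<2*K}. w n * (1 - xx e)^(2*n))"
          using lam_bound[OF xx[OF eE] b] unfolding C0_def w_def .
      qed
      then obtain Kf where Kf: "\<And>e. e \<in> F \<Longrightarrow> Kf e \<ge> 1 \<and> xx e powr (-\<beta>) \<le> C0 * (\<Sum>n\<in>{Kf e..<2*Kf e}. w n * (1 - xx e)^(2*n))"
        by metis
      define N where "N = Max (insert 0 ((\<lambda>e. 2 * Kf e) ` F))"
      have KN: "{Kf e..<2*Kf e} \<subseteq> {Suc 0..<Suc N}" if "e \<in> F" for e
      proof -
        have "2 * Kf e \<le> N" unfolding N_def using F that by (intro Max_ge) auto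
        thus ?thesis using Kf[OF that] by auto
      qed
      have step1: "lam e powr (-\<beta>) * (inner \<theta> e)\<^sup>2 \<le> \<gamma> powr \<beta> * C0 * (\<Sum>n\<in>{Suc 0..<Suc N}. w n * ((1 - xx e)^n * inner \<theta> e)\<^sup>2)"
        if e: "e \<in> F" for e
      proof -
        have eE: "e \<in> E" using e F by auto
        have nn: "0 \<le> w n * (1 - xx e)^(2*n)" for n
          using wnn xx[OF eE] by simp
        have "lam e powr (-\<beta>) = \<gamma> powr \<beta> * xx e powr (-\<beta>)" by (rule lamx[OF eE])
        also have "\<dots> \<le> \<gamma> powr \<beta> * (C0 * (\<Sum>n\<in>{Kf e..<2*Kf e}. w n * (1 - xx e)^(2*n)))"
          using Kf[OF e] by (intro mult_left_mono) auto
        also have "\<dots> \<le> \<gamma> powr \<beta> * (C0 * (\<Sum>n\<in>{Suc 0..<Suc N}. w n * (1 - xx e)^(2*n)))"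
          using KN[OF e] nn C0 by (intro mult_left_mono sum_mono2) auto
        finally have "lam e powr (-\<beta>) * (inner \<theta> e)\<^sup>2 \<le> \<gamma> powr \<beta> * (C0 * (\<Sum>n\<in>{Suc 0..<Suc N}. w n * (1 - xx e)^(2*n))) * (inner \<theta> e)\<^sup>2"
          by (rule mult_right_mono) simp
        also have "\<dots> = \<gamma> powr \<beta> * C0 * (\<Sum>n\<in>{Suc 0..<Suc N}. w n * (1 - xx e)^(2*n) * (inner \<theta> e)\<^sup>2)"
          by (subst sum_distrib_right[symmetric]) (simp only: mult.assoc)
        also have "(\<Sum>n\<in>{Suc 0..<Suc N}. w n * (1 - xx e)^(2*n) * (inner \<theta> e)\<^sup>2) = (\<Sum>n\<in>{Suc 0..<Suc N}. w n * ((1 - xx e)^n * inner \<theta> e)\<^sup>2)"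
          by (intro sum.cong refl) (simp add: power_mult_distrib power_mult[symmetric] mult.commute)
        finally show ?thesis .
      qed
      have "(\<Sum>e\<in>F. lam e powr (-\<beta>) * (inner \<theta> e)\<^sup>2) \<le> (\<Sum>e\<in>F. \<gamma> powr \<beta> * C0 * (\<Sum>n\<in>{Suc 0..<Suc N}. w n * ((1 - xx e)^n * inner \<theta> e)\<^sup>2))"
        by (rule sum_mono) (rule step1)
      also have "\<dots> = \<gamma> powr \<beta> * C0 * (\<Sum>n\<in>{Suc 0..<Suc N}. w n * (\<Sum>e\<in>F. (inner ((T ^^ n) \<theta>) e)\<^sup>2))"
      proof -
        have "(\<Sum>e\<in>F. \<gamma> powr \<beta> * C0 * (\<Sum>n\<in>{Suc 0..<Suc N}. w n * ((1 - xx e)^n * inner \<theta> e)\<^sup>2))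
            = \<gamma> powr \<beta> * C0 * (\<Sum>n\<in>{Suc 0..<Suc N}. \<Sum>e\<in>F. w n * ((1 - xx e)^n * inner \<theta> e)\<^sup>2)"
          by (simp add: sum_distrib_left sum.swap[of _ F])
        also have "\<dots> = \<gamma> powr \<beta> * C0 * (\<Sum>n\<in>{Suc 0..<Suc N}. w n * (\<Sum>e\<in>F. (inner ((T ^^ n) \<theta>) e)\<^sup>2))"
          using F coef by (intro arg_cong[where f="\<lambda>z. \<gamma> powr \<beta> * C0 * z"] sum.cong refl)
                     (auto simp: sum_distrib_left xx_def intro!: sum.cong)
        finally show ?thesis .
      qed
      also have "\<dots> \<le> \<gamma> powr \<beta> * C0 * (\<Sum>n\<in>{Suc 0..<Suc N}. g (n - 1))"
      proof (intro mult_left_mono sum_mono)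
        fix n assume n: "n \<in> {Suc 0..<Suc N}"
        hence n1: "n \<ge> 1" by auto
        have tp: "0 < t n" using assms(9) n1 by auto
        have "w n * (\<Sum>e\<in>F. (inner ((T ^^ n) \<theta>) e)\<^sup>2) \<le> w n * (1 / (real n powr \<beta> * t n))"
          using bes[of F "(T ^^ n) \<theta>"] F hyp[OF n1] wnn by (intro mult_left_mono) auto
        also have "\<dots> = 1 / (real n * t n)"
          unfolding w_def using n1 tp by (simp add: powr_diff field_simps)
        also have "\<dots> = g (n - 1)" unfolding g_def using n1 by (simp add: Suc_diff_1)
        finally show "w n * (\<Sum>e\<in>F. (inner ((T ^^ n) \<theta>) e)\<^sup>2) \<le> g (n - 1)" .
      qed (use C0 assms(7) in auto)
      also have "(\<Sum>n\<in>{Suc 0..<Suc N}. g (n - 1)) = (\<Sum>n\<in>{..<N}. g n)"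
        by (simp only: sum.shift_bounds_Suc_ivl diff_Suc_1 atLeast0LessThan)
      also have "(\<Sum>n\<in>{..<N}. g n) \<le> SS"
        unfolding SS_def by (rule sum_le_suminf[OF gs]) (auto simp: gnn)
      finally show "(\<Sum>e\<in>F. lam e powr (-\<beta>) * (inner \<theta> e)\<^sup>2) \<le> \<gamma> powr \<beta> * C0 * SS"
        using C0 assms(7) by (simp add: mult_left_mono)
    qed
  qed
  then obtain C where C: "\<And>F. finite F \<Longrightarrow> F \<subseteq> E \<Longrightarrow> (\<Sum>e\<in>F. lam e powr (-\<beta>) * (inner \<theta> e)\<^sup>2) \<le> C"
    by blast
  have "beta_norm_sq E lam \<beta> \<theta> \<le> ennreal C"
    unfolding beta_norm_sq_def
  proof (rule infsum_le_finite_sums)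
    show "(\<lambda>e. ennreal (lam e powr (-\<beta>) * (inner \<theta> e)\<^sup>2)) summable_on E" by (rule nonneg_summable_on_complete) simp
    fix F assume F: "finite F" "F \<subseteq> E"
    have "(\<Sum>e\<in>F. ennreal (lam e powr (-\<beta>) * (inner \<theta> e)\<^sup>2)) = ennreal (\<Sum>e\<in>F. lam e powr (-\<beta>) * (inner \<theta> e)\<^sup>2)"
      by (rule sum_ennreal) simp
    also have "\<dots> \<le> ennreal C" using C[OF F] by (rule ennreal_leI)
    finally show "(\<Sum>e\<in>F. ennreal (lam e powr (-\<beta>) * (inner \<theta> e)\<^sup>2)) \<le> ennreal C" .
  qed
  also have "ennreal C < \<infinity>" by simp
  finally show ?thesis .
qed

end
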